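(* Let $R$ be a unital ring with involution and let $a,b\in R$ both be core invertible. Then $a\overset{\circledast}{\leq} b$ if and only if $a^{\circledast}b=b^{\circledast}a$, $ba^{\circledast}=ab^{\circledast}$ and $ab^{\circledast}a=a$.
   Context: $R$ is a ring with identity and an involution $x\mapsto x^{*}$. An element $a\in R$ is core invertible if there exists $x\in R$ with $axa=a$, $xR=aR$ and $Rx=Ra^{*}$; such $x$ is unique, called the core inverse of $a$ and denoted $a^{\circledast}$. For $a$ core invertible and $b\in R$, $a\overset{\circledast}{\leq} b$ means $a^{\circledast}a=a^{\circledast}b$ and $aa^{\circledast}=ba^{\circledast}$. *)

theory Defs
  imports Main
begin

class ring_invol = ring_1 +
  fixes invol :: "'a \<Rightarrow> 'a"
  assumes invol_invol: "invol (invol x) = x"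
    and invol_add: "invol (x + y) = invol x + invol y"
    and invol_mult: "invol (x * y) = invol y * invol x"

context ring_invol
begin

definition right_ideal_gen :: "'a \<Rightarrow> 'a set" where
  "right_ideal_gen a = {a * r | r. True}"

definition left_ideal_gen :: "'a \<Rightarrow> 'a set" where
  "left_ideal_gen a = {r * a | r. True}"

definition is_core_inverse :: "'a \<Rightarrow> 'a \<Rightarrow> bool" where
  "is_core_inverse a x \<longleftrightarrow> a * x * a = a \<and>
     right_ideal_gen x = right_ideal_gen a \<and>
     left_ideal_gen x = left_ideal_gen (invol a)"

definition core_invertible :: "'a \<Rightarrow> bool" where
  "core_invertible a \<longleftrightarrow> (\<exists>x. is_core_inverse a x)"

definition core_inv :: "'a \<Rightarrow> 'a" where
  "core_inv a = (THE x. is_core_inverse a x)"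

definition core_le :: "'a \<Rightarrow> 'a \<Rightarrow> bool" where
  "core_le a b \<longleftrightarrow> core_inv a * a = core_inv a * b \<and> a * core_inv a = b * core_inv a"

end

end

theory Submission
  imports Defs
begin

context ring_invol
begin

lemma ci_props:
  assumes "is_core_inverse a x"
  shows "a * x * a = a \<and> x * a * x = x \<and> invol (a * x) = a * x \<and> x * a * a = a \<and> a * x * x = x"
proof -
  have h1: "a * x * a = a" and h2: "right_ideal_gen x = right_ideal_gen a"
    and h3: "left_ideal_gen x = left_ideal_gen (invol a)"
    using assms unfolding is_core_inverse_def by auto
  have "x \<in> right_ideal_gen x" unfolding right_ideal_gen_def by (auto intro: exI[of _ 1])
  then obtain u where u: "x = a * u" using h2 unfolding right_ideal_gen_def by auto
  have "a \<in> right_ideal_gen a" unfolding right_ideal_gen_def by (auto intro: exI[of _ 1])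
  then obtain v where v: "a = x * v" using h2 unfolding right_ideal_gen_def by auto
  have "x \<in> left_ideal_gen x" unfolding left_ideal_gen_def by (auto intro: exI[of _ 1])
  then obtain w where w: "x = w * invol a" using h3 unfolding left_ideal_gen_def by auto
  have ia: "invol a = invol a * invol x * invol a"
    using arg_cong[OF h1, of invol] by (simp add: invol_mult mult.assoc)
  have x1: "x = x * invol (a * x)"
  proof -
    have "x = w * (invol a * invol x * invol a)" using w ia by simp
    also have "\<dots> = x * invol (a * x)" using w by (simp add: invol_mult mult.assoc)
    finally show ?thesis .
  qed
  have herm: "invol (a * x) = a * x"
  proof -
    have "a * x = a * x * invol (a * x)" using x1 by (metis mult.assoc)
    hence "invol (a * x) = invol (a * x * invol (a * x))" by simp
    also have "\<dots> = a * x * invol (a * x)" by (simp add: invol_mult invol_invol mult.assoc)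
    finally show ?thesis using \<open>a * x = a * x * invol (a * x)\<close> by simp
  qed
  have xax: "x * a * x = x" using x1 herm by (simp add: mult.assoc)
  have "x * a * a = a" using v xax by (metis mult.assoc)
  moreover have "a * x * x = x" using u h1 by (metis mult.assoc)
  ultimately show ?thesis using h1 xax herm by simp
qed

lemma ci_unique:
  assumes "is_core_inverse a x" "is_core_inverse a y"
  shows "x = y"
proof -
  have X: "a * x * a = a" "x * a * x = x" "invol (a * x) = a * x" "x * a * a = a" "a * x * x = x"
    using ci_props[OF assms(1)] by auto
  have Y: "a * y * a = a" "y * a * y = y" "invol (a * y) = a * y" "y * a * a = a" "a * y * y = y"
    using ci_props[OF assms(2)] by auto
  have axy: "a * x = a * y"
  proof -
    have "a * y = invol (a * y)" using Y by simp
    also have "\<dots> = invol y * invol (a * x * a)" using X by (simp add: invol_mult)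
    also have "\<dots> = invol (a * y) * invol (a * x)" by (simp add: invol_mult mult.assoc)
    also have "\<dots> = a * y * (a * x)" using X Y by simp
    also have "\<dots> = a * y * a * x" by (simp add: mult.assoc)
    also have "\<dots> = a * x" using Y by simp
    finally show ?thesis by simp
  qed
  have "y * a * x = y * (a * (a * x * x))" using X by (simp add: mult.assoc)
  also have "\<dots> = y * a * a * x * x" by (simp add: mult.assoc)
  also have "\<dots> = x" using X Y by (simp add: mult.assoc)
  finally have "y * a * x = x" .
  thus ?thesis using axy Y by (metis mult.assoc)
qed

lemma core_inv_is:
  assumes "core_invertible a"
  shows "is_core_inverse a (core_inv a)"
  using assms unfolding core_invertible_def core_inv_def
  by (metis theI ci_unique)

end

theorem proposition2p8:
  fixes a b :: "'a :: ring_invol"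
  assumes "core_invertible a" and "core_invertible b"
  shows "core_le a b \<longleftrightarrow>
    (core_inv a * b = core_inv b * a \<and> b * core_inv a = a * core_inv b \<and> a * core_inv b * a = a)"
proof -
  define x where "x = core_inv a"
  define y where "y = core_inv b"
  have X: "a * x * a = a" "x * a * x = x" "invol (a * x) = a * x" "x * a * a = a" "a * x * x = x"
    using ci_props[OF core_inv_is[OF assms(1)]] x_def by auto
  have Y: "b * y * b = b" "y * b * y = y" "invol (b * y) = b * y" "y * b * b = b" "b * y * y = y"
    using ci_props[OF core_inv_is[OF assms(2)]] y_def by auto
  show ?thesis unfolding core_le_def x_def[symmetric] y_def[symmetric]
  proof
    assume "x * a = x * b \<and> a * x = b * x"
    hence L1: "x * a = x * b" and L2: "a * x = b * x" by auto
    have a1: "a = b * x * a" using X L2 by simp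
    have a2: "a = a * x * b" using X L1 by (metis mult.assoc)
    have x1: "x = b * x * x" using X L2 by (metis mult.assoc)
    have "y * a = y * b * b * x * x * a" using a1 x1 by (metis mult.assoc)
    also have "\<dots> = x * a" using Y x1 by (metis mult.assoc)
    finally have g1: "x * b = y * a" using L1 by simp
    have "x = x * invol (a * x)" using X by (metis mult.assoc)
    also have "\<dots> = x * invol (b * x)" using L2 by simp
    also have "\<dots> = x * invol x * invol (b * y * b)" using Y by (simp add: invol_mult mult.assoc)
    also have "\<dots> = x * invol (b * x) * invol (b * y)" by (simp add: invol_mult mult.assoc)
    also have "\<dots> = x * (a * x) * (b * y)" using L2 X(3) Y(3) by simp
    also have "\<dots> = x * b * y" using X by (metis mult.assoc)
    finally have x2: "x = x * b * y" .
    have "a * y = a * x * b * y" using a2 by simp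
    also have "\<dots> = a * x" using x2 by (metis mult.assoc)
    finally have g2: "b * x = a * y" using L2 by simp
    have g3: "a * y * a = a" using g2 L2 X by simp
    show "x * b = y * a \<and> b * x = a * y \<and> a * y * a = a" using g1 g2 g3 by simp
  next
    assume "x * b = y * a \<and> b * x = a * y \<and> a * y * a = a"
    hence R1: "x * b = y * a" and R2: "b * x = a * y" and R3: "a * y * a = a" by auto
    have "b * x = b * x * a * x" using X by (metis mult.assoc)
    also have "\<dots> = a * y * a * x" using R2 by simp
    also have "\<dots> = a * x" using R3 by simp
    finally have e1: "b * x = a * x" .
    have "x * a = x * a * y * a" using R3 by (metis mult.assoc)
    also have "\<dots> = x * a * x * b" using R1 by (metis mult.assoc)
    also have "\<dots> = x * b" using X by simp
    finally show "x * a = x * b \<and> a * x = b * x" using e1 by simp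
  qed
qed

end
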